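(* Consider a graphical constant-sum game with a fully-mixed Nash equilibrium $\hat{\mathbf{x}}^*=(\mathbf{x}^*_1,\ldots,\mathbf{x}^*_m)$, and suppose each agent $i$ uses a learning dynamic whose learning operator with shift $\mathbf{x}^*_i$ is finitely lossless via a storage function $L^i$, so that the merged learning operator with shift $\hat{\mathbf{x}}^*$ is finitely lossless via $L_1(\hat{\mathbf{q}})=\sum_iL^i(\mathbf{q}_i)$. Then the feedback interconnection system of this merged learning operator with the game operator with shift $\hat{\mathbf{x}}^*$ is finitely lossless via the storage function $L_1$: for every initial state, every external input $\mathbf{r}$ and every $t\ge0$, $L_1(\hat{\mathbf{q}}(t))=L_1(\hat{\mathbf{q}}(0))+\int_0^t\langle\mathbf{r}(\tau),\hat{\mathbf{x}}(\tau)-\hat{\mathbf{x}}^*\rangle\,d\tau$. In particular, when $\mathbf{r}\equiv\mathbf{0}$, $L_1(\hat{\mathbf{q}}(t))$ is constant in $t$.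
   Context: Agent $i\in\{1,\ldots,m\}$ has $n_i$ actions; $\Delta^{n}=\{\mathbf{x}\in\mathbb{R}^n:x_j\ge0,\sum_jx_j=1\}$, $\Delta=\prod_i\Delta^{n_i}$. A graphical game has matrices $\mathbf{A}^{ik}\in\mathbb{R}^{n_i\times n_k}$ ($i\ne k$); agent $i$'s payoff vector is $\mathbf{p}_i=\sum_{k\neq i}\mathbf{A}^{ik}\mathbf{x}_k$ and payoff $\langle\mathbf{x}_i,\mathbf{p}_i\rangle$; it is constant-sum if $\mathbf{A}^{ik}_{j\ell}+\mathbf{A}^{ki}_{\ell j}=c^{\{i,k\}}$ for constants $c^{\{i,k\}}$ and all $j,\ell$. A Nash equilibrium $\hat{\mathbf{x}}^*\in\Delta$ has each $\mathbf{x}^*_i$ a best response to the others; fully mixed means all entries positive. A learning dynamic over $n$ actions has conversion function $f:\mathbb{R}^n\to\Delta^n$, state $\mathbf{q}(t)=\mathbf{q}^0+\int_0^t\mathbf{u}(\tau)d\tau$ for input $\mathbf{u}$, and strategy $\mathbf{x}=f(\mathbf{q})$; its learning operator with shift $\mathbf{x}^*$ outputs $\mathbf{x}-\mathbf{x}^*$ and is finitely lossless via $L$ if $L$ is bounded below and $L(\mathbf{q}(t))=L(\mathbf{q}^0)+\int_0^t\langle\mathbf{u},\mathbf{x}-\mathbf{x}^*\rangle d\tau$ for all initial states, inputs and $t$. The merged learning operator concatenates the agents' operators (input $\hat{\mathbf{u}}$, state $\hat{\mathbf{q}}$, output $\hat{\mathbf{x}}-\hat{\mathbf{x}}^*$).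 The game operator with shift $\hat{\mathbf{x}}^*$ maps input $\hat{\mathbf{x}}-\hat{\mathbf{x}}^*$ to output $-\hat{\mathbf{p}}$. The feedback interconnection system with external input $\mathbf{r}$ is defined by: the merged learning operator's input is $\hat{\mathbf{u}}=\mathbf{r}-(-\hat{\mathbf{p}})=\mathbf{r}+\hat{\mathbf{p}}$, its output $\hat{\mathbf{x}}-\hat{\mathbf{x}}^*$ is the game operator's input, and $\hat{\mathbf{p}}$ is computed from $\hat{\mathbf{x}}$ by the game; the system's output is $\hat{\mathbf{x}}-\hat{\mathbf{x}}^*$. Solutions are assumed to exist and be unique. *)

theory Defs
  imports "HOL-Analysis.Analysis"
begin

text \<open>Vectors in R^n are represented as functions nat => real; only the
  components j < n are meaningful.  A vector "lies in R^n" if its components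
  j >= n vanish (a normal form).\<close>

definition in_Rn :: "nat \<Rightarrow> (nat \<Rightarrow> real) \<Rightarrow> bool" where
  "in_Rn n v \<longleftrightarrow> (\<forall>j\<ge>n. v j = 0)"

definition ip :: "nat \<Rightarrow> (nat \<Rightarrow> real) \<Rightarrow> (nat \<Rightarrow> real) \<Rightarrow> real" where
  "ip n a b = (\<Sum>j<n. a j * b j)"

definition prob_simplex :: "nat \<Rightarrow> (nat \<Rightarrow> real) \<Rightarrow> bool" where
  "prob_simplex n x \<longleftrightarrow> (\<forall>j<n. 0 \<le> x j) \<and> (\<Sum>j<n. x j) = 1"

definition adm_input :: "nat \<Rightarrow> (real \<Rightarrow> nat \<Rightarrow> real) \<Rightarrow> bool" where
  "adm_input n u \<longleftrightarrow> (\<forall>j<n. \<forall>t\<ge>0. (\<lambda>\<tau>. u \<tau> j) integrable_on {0..t})"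

definition learn_state :: "nat \<Rightarrow> (nat \<Rightarrow> real) \<Rightarrow> (real \<Rightarrow> nat \<Rightarrow> real) \<Rightarrow> real \<Rightarrow> nat \<Rightarrow> real" where
  "learn_state n q0 u t = (\<lambda>j. if j < n then q0 j + integral {0..t} (\<lambda>\<tau>. u \<tau> j) else 0)"

definition conversion_fun :: "nat \<Rightarrow> ((nat \<Rightarrow> real) \<Rightarrow> (nat \<Rightarrow> real)) \<Rightarrow> bool" where
  "conversion_fun n f \<longleftrightarrow> (\<forall>q. in_Rn n q \<longrightarrow> prob_simplex n (f q))"

text \<open>The learning operator with shift xs (input u, output f(q) - xs) is finitely
  lossless via L.\<close>
definition finitely_lossless ::
  "nat \<Rightarrow> ((nat \<Rightarrow> real) \<Rightarrow> (nat \<Rightarrow> real)) \<Rightarrow> (nat \<Rightarrow> real) \<Rightarrow> ((nat \<Rightarrow> real) \<Rightarrow> real) \<Rightarrow> bool" where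
  "finitely_lossless n f xs L \<longleftrightarrow>
     (\<exists>c. \<forall>q. in_Rn n q \<longrightarrow> c \<le> L q) \<and>
     (\<forall>q0 u t. in_Rn n q0 \<and> adm_input n u \<and> 0 \<le> t \<longrightarrow>
        ((\<lambda>\<tau>. ip n (u \<tau>) (\<lambda>j. f (learn_state n q0 u \<tau>) j - xs j))
           has_integral (L (learn_state n q0 u t) - L q0)) {0..t})"

text \<open>Graphical games: m agents, agent i has n i actions, A i k j l is entry (j,l)
  of the matrix A^{ik}.  Profiles: x i j.\<close>
definition payoff_vec ::
  "nat \<Rightarrow> (nat \<Rightarrow> nat) \<Rightarrow> (nat \<Rightarrow> nat \<Rightarrow> nat \<Rightarrow> nat \<Rightarrow> real) \<Rightarrow> nat \<Rightarrow> (nat \<Rightarrow> nat \<Rightarrow> real) \<Rightarrow> nat \<Rightarrow> real" where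
  "payoff_vec m n A i x = (\<lambda>j. if j < n i then (\<Sum>k\<in>{..<m} - {i}. \<Sum>l<n k. A i k j l * x k l) else 0)"

definition constant_sum :: "nat \<Rightarrow> (nat \<Rightarrow> nat) \<Rightarrow> (nat \<Rightarrow> nat \<Rightarrow> nat \<Rightarrow> nat \<Rightarrow> real) \<Rightarrow> bool" where
  "constant_sum m n A \<longleftrightarrow> (\<forall>i<m. \<forall>k<m. i \<noteq> k \<longrightarrow>
      (\<exists>c. \<forall>j<n i. \<forall>l<n k. A i k j l + A k i l j = c))"

definition profile :: "nat \<Rightarrow> (nat \<Rightarrow> nat) \<Rightarrow> (nat \<Rightarrow> nat \<Rightarrow> real) \<Rightarrow> bool" where
  "profile m n x \<longleftrightarrow> (\<forall>i<m. prob_simplex (n i) (x i))"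

definition nash_eq :: "nat \<Rightarrow> (nat \<Rightarrow> nat) \<Rightarrow> (nat \<Rightarrow> nat \<Rightarrow> nat \<Rightarrow> nat \<Rightarrow> real) \<Rightarrow> (nat \<Rightarrow> nat \<Rightarrow> real) \<Rightarrow> bool" where
  "nash_eq m n A xs \<longleftrightarrow> profile m n xs \<and>
     (\<forall>i<m. \<forall>y. prob_simplex (n i) y \<longrightarrow>
        ip (n i) y (payoff_vec m n A i xs) \<le> ip (n i) (xs i) (payoff_vec m n A i xs))"

definition fully_mixed :: "nat \<Rightarrow> (nat \<Rightarrow> nat) \<Rightarrow> (nat \<Rightarrow> nat \<Rightarrow> real) \<Rightarrow> bool" where
  "fully_mixed m n xs \<longleftrightarrow> (\<forall>i<m. \<forall>j<n i. 0 < xs i j)"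

text \<open>Solution of the feedback interconnection with external input r:
  agent i's learning operator receives input u_i = r_i + p_i, where p is the
  payoff vector of the strategies x_k = f_k(q_k); q_i(t) = q_i(0) + int_0^t u_i.\<close>
definition fb_input ::
  "nat \<Rightarrow> (nat \<Rightarrow> nat) \<Rightarrow> (nat \<Rightarrow> nat \<Rightarrow> nat \<Rightarrow> nat \<Rightarrow> real) \<Rightarrow> (nat \<Rightarrow> (nat \<Rightarrow> real) \<Rightarrow> (nat \<Rightarrow> real))
   \<Rightarrow> (real \<Rightarrow> nat \<Rightarrow> nat \<Rightarrow> real) \<Rightarrow> (real \<Rightarrow> nat \<Rightarrow> nat \<Rightarrow> real) \<Rightarrow> nat \<Rightarrow> real \<Rightarrow> nat \<Rightarrow> real" where
  "fb_input m n A f r qh i = (\<lambda>\<tau> j. r \<tau> i j + payoff_vec m n A i (\<lambda>k. f k (qh \<tau> k)) j)"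

definition fb_solution ::
  "nat \<Rightarrow> (nat \<Rightarrow> nat) \<Rightarrow> (nat \<Rightarrow> nat \<Rightarrow> nat \<Rightarrow> nat \<Rightarrow> real) \<Rightarrow> (nat \<Rightarrow> (nat \<Rightarrow> real) \<Rightarrow> (nat \<Rightarrow> real))
   \<Rightarrow> (real \<Rightarrow> nat \<Rightarrow> nat \<Rightarrow> real) \<Rightarrow> (real \<Rightarrow> nat \<Rightarrow> nat \<Rightarrow> real) \<Rightarrow> bool" where
  "fb_solution m n A f r qh \<longleftrightarrow> (\<forall>i<m.
      in_Rn (n i) (qh 0 i) \<and>
      adm_input (n i) (fb_input m n A f r qh i) \<and>
      (\<forall>t\<ge>0. qh t i = learn_state (n i) (qh 0 i) (fb_input m n A f r qh i) t))"

definition ext_input_adm :: "nat \<Rightarrow> (nat \<Rightarrow> nat) \<Rightarrow> (real \<Rightarrow> nat \<Rightarrow> nat \<Rightarrow> real) \<Rightarrow> bool" where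
  "ext_input_adm m n r \<longleftrightarrow> (\<forall>i<m. adm_input (n i) (\<lambda>\<tau>. r \<tau> i))"

definition merged_storage :: "nat \<Rightarrow> (nat \<Rightarrow> (nat \<Rightarrow> real) \<Rightarrow> real) \<Rightarrow> (nat \<Rightarrow> nat \<Rightarrow> real) \<Rightarrow> real" where
  "merged_storage m L qh = (\<Sum>i<m. L i (qh i))"

definition fb_finitely_lossless ::
  "nat \<Rightarrow> (nat \<Rightarrow> nat) \<Rightarrow> (nat \<Rightarrow> nat \<Rightarrow> nat \<Rightarrow> nat \<Rightarrow> real) \<Rightarrow> (nat \<Rightarrow> (nat \<Rightarrow> real) \<Rightarrow> (nat \<Rightarrow> real))
   \<Rightarrow> (nat \<Rightarrow> nat \<Rightarrow> real) \<Rightarrow> ((nat \<Rightarrow> nat \<Rightarrow> real) \<Rightarrow> real) \<Rightarrow> bool" where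
  "fb_finitely_lossless m n A f xs L1 \<longleftrightarrow>
     (\<exists>c. \<forall>qh. (\<forall>i<m. in_Rn (n i) (qh i)) \<longrightarrow> c \<le> L1 qh) \<and>
     (\<forall>r qh t. ext_input_adm m n r \<and> fb_solution m n A f r qh \<and> 0 \<le> t \<longrightarrow>
        ((\<lambda>\<tau>. \<Sum>i<m. ip (n i) (r \<tau> i) (\<lambda>j. f i (qh \<tau> i) j - xs i j))
           has_integral (L1 (qh t) - L1 (qh 0))) {0..t})"

end

theory Submission imports Defs begin

definition BB :: "(nat \<Rightarrow> nat) \<Rightarrow> (nat \<Rightarrow> nat \<Rightarrow> nat \<Rightarrow> nat \<Rightarrow> real) \<Rightarrow> nat \<Rightarrow> nat \<Rightarrow> (nat \<Rightarrow> real) \<Rightarrow> (nat \<Rightarrow> real) \<Rightarrow> real" where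
  "BB n A i k y w = (\<Sum>j<n i. \<Sum>l<n k. A i k j l * y j * w l)"

lemma ip_comm: "ip n a b = ip n b a"
  unfolding ip_def by (simp add: mult.commute)

lemma ip_payoff: "ip (n i) z (payoff_vec m n A i x) = (\<Sum>k\<in>{..<m} - {i}. BB n A i k z (x k))"
proof -
  have "ip (n i) z (payoff_vec m n A i x) = (\<Sum>j<n i. z j * (\<Sum>k\<in>{..<m} - {i}. \<Sum>l<n k. A i k j l * x k l))"
    unfolding ip_def payoff_vec_def by simp
  also have "\<dots> = (\<Sum>j<n i. \<Sum>k\<in>{..<m} - {i}. \<Sum>l<n k. A i k j l * z j * x k l)"
    by (simp add: sum_distrib_left mult_ac)
  also have "\<dots> = (\<Sum>k\<in>{..<m} - {i}. \<Sum>j<n i. \<Sum>l<n k. A i k j l * z j * x k l)"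
    by (rule sum.swap)
  finally show ?thesis unfolding BB_def .
qed

lemma cs_sum:
  assumes "\<forall>j<n i. \<forall>l<n k. A i k j l + A k i l j = c"
    and "prob_simplex (n i) y" "prob_simplex (n k) w"
  shows "BB n A i k y w + BB n A k i w y = c"
proof -
  have "BB n A k i w y = (\<Sum>j<n i. \<Sum>l<n k. A k i l j * y j * w l)"
    unfolding BB_def by (subst sum.swap) (simp add: mult_ac)
  hence "BB n A i k y w + BB n A k i w y = (\<Sum>j<n i. \<Sum>l<n k. (A i k j l + A k i l j) * y j * w l)"
    unfolding BB_def by (simp add: sum.distrib[symmetric] algebra_simps)
  also have "\<dots> = (\<Sum>j<n i. \<Sum>l<n k. c * y j * w l)"
    using assms(1) by (intro sum.cong refl) auto
  also have "\<dots> = c * (\<Sum>j<n i. y j) * (\<Sum>l<n k. w l)"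
    by (simp add: sum_distrib_left sum_distrib_right mult_ac)
  also have "\<dots> = c" using assms(2,3) unfolding prob_simplex_def by simp
  finally show ?thesis .
qed

lemma cs_const:
  assumes "constant_sum m n A" "i < m" "k < m" "i \<noteq> k"
    and "prob_simplex (n i) y" "prob_simplex (n k) w"
    and "prob_simplex (n i) y'" "prob_simplex (n k) w'"
  shows "BB n A i k y w + BB n A k i w y = BB n A i k y' w' + BB n A k i w' y'"
proof -
  obtain c where "\<forall>j<n i. \<forall>l<n k. A i k j l + A k i l j = c"
    using assms(1-4) unfolding constant_sum_def by blast
  with cs_sum[OF this] assms(5-8) show ?thesis by simp
qed

lemma nash_const:
  assumes "nash_eq m n A xs" "fully_mixed m n xs" "i < m" "prob_simplex (n i) y"
  shows "ip (n i) y (payoff_vec m n A i xs) = ip (n i) (xs i) (payoff_vec m n A i xs)"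
proof -
  define p where "p = payoff_vec m n A i xs"
  have sx: "prob_simplex (n i) (xs i)" using assms(1,3) unfolding nash_eq_def profile_def by blast
  hence ne: "{..<n i} \<noteq> {}" unfolding prob_simplex_def by auto
  have "Max (p ` {..<n i}) \<in> p ` {..<n i}" using ne by (intro Max_in) auto
  then obtain j0 where j0a: "j0 < n i" "p j0 = Max (p ` {..<n i})" by auto
  have "p j \<le> p j0" if "j < n i" for j
  proof -
    have "p j \<le> Max (p ` {..<n i})" by (rule Max_ge) (use that in auto)
    thus ?thesis by (simp only: j0a(2))
  qed
  hence j0: "j0 < n i" "\<forall>j<n i. p j \<le> p j0" using j0a(1) by auto
  define e where "e = (\<lambda>j::nat. if j = j0 then (1::real) else 0)"
  have es: "(\<Sum>j<n i. e j) = 1" unfolding e_def using j0(1) by simp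
  have se: "prob_simplex (n i) e" unfolding prob_simplex_def using es by (simp add: e_def)
  have "(\<Sum>j<n i. e j * p j) = (\<Sum>j<n i. if j = j0 then p j else 0)"
    unfolding e_def by (rule sum.cong) auto
  also have "\<dots> = p j0" using j0(1) by simp
  finally have ipe: "ip (n i) e p = p j0" unfolding ip_def .
  have le: "p j0 \<le> ip (n i) (xs i) p"
  proof -
    have "ip (n i) e p \<le> ip (n i) (xs i) p"
      using assms(1,3) se unfolding nash_eq_def p_def by blast
    thus ?thesis using ipe by simp
  qed
  have "(\<Sum>j<n i. xs i j * (p j0 - p j)) = p j0 - ip (n i) (xs i) p"
  proof -
    have "(\<Sum>j<n i. xs i j * (p j0 - p j)) = (\<Sum>j<n i. xs i j) * p j0 - (\<Sum>j<n i. xs i j * p j)"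
      by (simp add: right_diff_distrib sum_subtractf sum_distrib_right)
    thus ?thesis using sx unfolding ip_def prob_simplex_def by simp
  qed
  hence sle: "(\<Sum>j<n i. xs i j * (p j0 - p j)) \<le> 0" using le by simp
  have nn: "\<forall>j\<in>{..<n i}. 0 \<le> xs i j * (p j0 - p j)"
  proof
    fix j assume "j \<in> {..<n i}"
    hence "0 \<le> xs i j" "p j \<le> p j0" using sx j0(2) unfolding prob_simplex_def by auto
    thus "0 \<le> xs i j * (p j0 - p j)" by (intro mult_nonneg_nonneg) auto
  qed
  have s0: "(\<Sum>j<n i. xs i j * (p j0 - p j)) = 0"
    using sle nn by (meson order_antisym sum_nonneg)
  have z: "xs i j * (p j0 - p j) = 0" if "j < n i" for j
    using sum_nonneg_eq_0_iff[of "{..<n i}" "\<lambda>j. xs i j * (p j0 - p j)"] s0 nn that by simp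
  have pc: "\<forall>j<n i. p j = p j0"
  proof (intro allI impI)
    fix j assume j: "j < n i"
    have "0 < xs i j" using assms(2,3) j unfolding fully_mixed_def by blast
    thus "p j = p j0" using z[OF j] by simp
  qed
  have "\<And>z. prob_simplex (n i) z \<Longrightarrow> ip (n i) z p = p j0"
  proof -
    fix z assume "prob_simplex (n i) z"
    hence "ip (n i) z p = (\<Sum>j<n i. z j * p j0)" unfolding ip_def using pc by simp
    also have "\<dots> = p j0" using \<open>prob_simplex (n i) z\<close> unfolding prob_simplex_def
      by (simp add: sum_distrib_right[symmetric])
    finally show "ip (n i) z p = p j0" .
  qed
  thus ?thesis using sx assms(4) unfolding p_def by metis
qed

lemma sum_swap_offdiag:
  fixes g :: "nat \<Rightarrow> nat \<Rightarrow> real"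
  shows "(\<Sum>i<m. \<Sum>k\<in>{..<m} - {i}. g i k) = (\<Sum>i<m. \<Sum>k\<in>{..<m} - {i}. g k i)"
proof -
  have d: "\<And>(h::nat\<Rightarrow>real) i. i < m \<Longrightarrow> (\<Sum>k\<in>{..<m} - {i}. h k) = (\<Sum>k<m. h k) - h i"
    by (simp add: sum_diff1)
  have "(\<Sum>i<m. \<Sum>k\<in>{..<m} - {i}. g i k) = (\<Sum>i<m. (\<Sum>k<m. g i k) - g i i)"
    by (intro sum.cong refl) (simp add: d)
  also have "\<dots> = (\<Sum>i<m. \<Sum>k<m. g i k) - (\<Sum>i<m. g i i)" by (simp add: sum_subtractf)
  also have "\<dots> = (\<Sum>i<m. \<Sum>k<m. g k i) - (\<Sum>i<m. g i i)" by (subst sum.swap) simp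
  also have "\<dots> = (\<Sum>i<m. (\<Sum>k<m. g k i) - g i i)" by (simp add: sum_subtractf)
  also have "\<dots> = (\<Sum>i<m. \<Sum>k\<in>{..<m} - {i}. g k i)"
    by (intro sum.cong refl) (simp add: d)
  finally show ?thesis .
qed

lemma game_zero:
  assumes cs: "constant_sum m n A" and ne: "nash_eq m n A xs" and fm: "fully_mixed m n xs"
    and sx: "\<forall>i<m. prob_simplex (n i) (x i)"
  shows "(\<Sum>i<m. ip (n i) (payoff_vec m n A i x) (\<lambda>j. x i j - xs i j)) = 0"
proof -
  have sxs: "\<forall>i<m. prob_simplex (n i) (xs i)" using ne unfolding nash_eq_def profile_def by blast
  define P where "P = (\<Sum>i<m. \<Sum>k\<in>{..<m} - {i}. BB n A i k (x i) (x k))"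
  define Q where "Q = (\<Sum>i<m. \<Sum>k\<in>{..<m} - {i}. BB n A i k (xs i) (x k))"
  define R where "R = (\<Sum>i<m. \<Sum>k\<in>{..<m} - {i}. BB n A i k (xs i) (xs k))"
  have BBlin: "\<And>i k. BB n A i k (\<lambda>j. x i j - xs i j) (x k) = BB n A i k (x i) (x k) - BB n A i k (xs i) (x k)"
    unfolding BB_def by (simp add: sum_subtractf[symmetric] algebra_simps)
  have X: "(\<Sum>i<m. ip (n i) (payoff_vec m n A i x) (\<lambda>j. x i j - xs i j)) = P - Q"
    unfolding P_def Q_def
    by (simp add: ip_comm[of _ "payoff_vec m n A _ x"] ip_payoff BBlin sum_subtractf)
  have PR: "P = R"
  proof -
    have "2 * P = P + (\<Sum>i<m. \<Sum>k\<in>{..<m} - {i}. BB n A k i (x k) (x i))"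
      unfolding P_def by (subst sum_swap_offdiag) simp
    also have "\<dots> = (\<Sum>i<m. \<Sum>k\<in>{..<m} - {i}. BB n A i k (x i) (x k) + BB n A k i (x k) (x i))"
      unfolding P_def by (simp add: sum.distrib)
    also have "\<dots> = (\<Sum>i<m. \<Sum>k\<in>{..<m} - {i}. BB n A i k (xs i) (xs k) + BB n A k i (xs k) (xs i))"
      using cs_const[OF cs] sx sxs by (intro sum.cong refl) auto
    also have "\<dots> = R + (\<Sum>i<m. \<Sum>k\<in>{..<m} - {i}. BB n A k i (xs k) (xs i))"
      unfolding R_def by (simp add: sum.distrib)
    also have "\<dots> = 2 * R"
      unfolding R_def by (subst sum_swap_offdiag) simp
    finally show ?thesis by simp
  qed
  have QR: "Q = R"
  proof -
    have "Q + (\<Sum>i<m. \<Sum>k\<in>{..<m} - {i}. BB n A k i (x k) (xs i)) =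
      (\<Sum>i<m. \<Sum>k\<in>{..<m} - {i}. BB n A i k (xs i) (x k) + BB n A k i (x k) (xs i))"
      unfolding Q_def by (simp add: sum.distrib)
    also have "\<dots> = (\<Sum>i<m. \<Sum>k\<in>{..<m} - {i}. BB n A i k (xs i) (xs k) + BB n A k i (xs k) (xs i))"
      using cs_const[OF cs] sx sxs by (intro sum.cong refl) auto
    also have "\<dots> = 2 * R"
      unfolding R_def by (simp add: sum.distrib) (subst (2) sum_swap_offdiag, simp)
    finally have 1: "Q + (\<Sum>i<m. \<Sum>k\<in>{..<m} - {i}. BB n A k i (x k) (xs i)) = 2 * R" .
    have "(\<Sum>i<m. \<Sum>k\<in>{..<m} - {i}. BB n A k i (x k) (xs i)) = (\<Sum>i<m. \<Sum>k\<in>{..<m} - {i}. BB n A i k (x i) (xs k))"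
      by (subst sum_swap_offdiag) simp
    also have "\<dots> = (\<Sum>i<m. ip (n i) (x i) (payoff_vec m n A i xs))"
      by (simp add: ip_payoff)
    also have "\<dots> = (\<Sum>i<m. ip (n i) (xs i) (payoff_vec m n A i xs))"
      using nash_const[OF ne fm] sx by (intro sum.cong refl) auto
    also have "\<dots> = R" unfolding R_def by (simp add: ip_payoff)
    finally show ?thesis using 1 by simp
  qed
  show ?thesis unfolding X PR QR by (rule diff_self)
qed

lemma fl_use:
  assumes "finitely_lossless n f xs L" "in_Rn n q0" "adm_input n u" "0 \<le> t"
  shows "((\<lambda>\<tau>. ip n (u \<tau>) (\<lambda>j. f (learn_state n q0 u \<tau>) j - xs j))
           has_integral (L (learn_state n q0 u t) - L q0)) {0..t}"
  using assms(1) unfolding finitely_lossless_def using assms(2-4) by simp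

lemma ip_add: "ip n (\<lambda>j. a j + b j) d = ip n a d + ip n b d"
  unfolding ip_def by (simp add: algebra_simps sum.distrib)

theorem corollaryC1:
  fixes m :: nat and n :: "nat \<Rightarrow> nat"
    and A :: "nat \<Rightarrow> nat \<Rightarrow> nat \<Rightarrow> nat \<Rightarrow> real"
    and xs :: "nat \<Rightarrow> nat \<Rightarrow> real"
    and f :: "nat \<Rightarrow> (nat \<Rightarrow> real) \<Rightarrow> (nat \<Rightarrow> real)"
    and L :: "nat \<Rightarrow> (nat \<Rightarrow> real) \<Rightarrow> real"
  assumes "constant_sum m n A"
    and "nash_eq m n A xs"
    and "fully_mixed m n xs"
    and "\<forall>i<m. conversion_fun (n i) (f i)"
    and "\<forall>i<m. finitely_lossless (n i) (f i) (xs i) (L i)"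
  shows "fb_finitely_lossless m n A f xs (merged_storage m L) \<and>
    (\<forall>qh t. fb_solution m n A f (\<lambda>_ _ _. 0) qh \<and> 0 \<le> t \<longrightarrow>
        merged_storage m L (qh t) = merged_storage m L (qh 0))"
proof -
  note cs = assms(1) and ne = assms(2) and fm = assms(3) and cf = assms(4) and fl = assms(5)
  have ex1: "\<exists>c. \<forall>q. in_Rn (n i) q \<longrightarrow> c \<le> L i q" if "i < m" for i
  proof -
    have "finitely_lossless (n i) (f i) (xs i) (L i)" using fl that by simp
    thus ?thesis unfolding finitely_lossless_def by (rule conjunct1)
  qed
  have "\<forall>i. \<exists>c. i < m \<longrightarrow> (\<forall>q. in_Rn (n i) q \<longrightarrow> c \<le> L i q)"
    using ex1 by blast
  then obtain c where c: "\<forall>i. i < m \<longrightarrow> (\<forall>q. in_Rn (n i) q \<longrightarrow> c i \<le> L i q)"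
    by (rule choice[THEN exE]) blast
  have lb: "\<exists>c. \<forall>qh. (\<forall>i<m. in_Rn (n i) (qh i)) \<longrightarrow> c \<le> merged_storage m L qh"
  proof (intro exI allI impI)
    fix qh :: "nat \<Rightarrow> nat \<Rightarrow> real" assume h: "\<forall>i<m. in_Rn (n i) (qh i)"
    have "(\<Sum>i<m. c i) \<le> (\<Sum>i<m. L i (qh i))"
    proof (rule sum_mono)
      fix i assume "i \<in> {..<m}"
      hence "i < m" by simp
      thus "c i \<le> L i (qh i)" using c h by blast
    qed
    thus "(\<Sum>i<m. c i) \<le> merged_storage m L qh" unfolding merged_storage_def .
  qed
  have integ: "((\<lambda>\<tau>. \<Sum>i<m. ip (n i) (r \<tau> i) (\<lambda>j. f i (qh \<tau> i) j - xs i j))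
           has_integral (merged_storage m L (qh t) - merged_storage m L (qh 0))) {0..t}"
    if sol: "fb_solution m n A f r qh" and t: "0 \<le> t" for r qh t
  proof -
    define u where "u i = fb_input m n A f r qh i" for i
    have ls: "\<And>i \<tau>. i < m \<Longrightarrow> 0 \<le> \<tau> \<Longrightarrow> learn_state (n i) (qh 0 i) (u i) \<tau> = qh \<tau> i"
    proof -
      fix i \<tau> assume a: "i < m" "0 \<le> (\<tau>::real)"
      have "qh \<tau> i = learn_state (n i) (qh 0 i) (fb_input m n A f r qh i) \<tau>"
        using sol a unfolding fb_solution_def by blast
      thus "learn_state (n i) (qh 0 i) (u i) \<tau> = qh \<tau> i" unfolding u_def by (rule sym)
    qed
    have inR: "\<And>i \<tau>. i < m \<Longrightarrow> 0 \<le> \<tau> \<Longrightarrow> in_Rn (n i) (qh \<tau> i)"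
    proof -
      fix i \<tau> assume a: "i < m" "0 \<le> (\<tau>::real)"
      have "qh \<tau> i = learn_state (n i) (qh 0 i) (u i) \<tau>" using ls[OF a] by simp
      thus "in_Rn (n i) (qh \<tau> i)" by (simp add: in_Rn_def learn_state_def)
    qed
    have each: "((\<lambda>\<tau>. ip (n i) (u i \<tau>) (\<lambda>j. f i (learn_state (n i) (qh 0 i) (u i) \<tau>) j - xs i j))
       has_integral (L i (qh t i) - L i (qh 0 i))) {0..t}" if "i < m" for i
    proof -
      have "in_Rn (n i) (qh 0 i)" "adm_input (n i) (u i)"
        using sol that unfolding fb_solution_def u_def by blast+
      hence "((\<lambda>\<tau>. ip (n i) (u i \<tau>) (\<lambda>j. f i (learn_state (n i) (qh 0 i) (u i) \<tau>) j - xs i j))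
       has_integral (L i (learn_state (n i) (qh 0 i) (u i) t) - L i (qh 0 i))) {0..t}"
        using fl_use[of "n i" "f i" "xs i" "L i" "qh 0 i" "u i" t] fl that t by simp
      thus ?thesis using ls[OF that t] by simp
    qed
    have "((\<lambda>\<tau>. \<Sum>i<m. ip (n i) (u i \<tau>) (\<lambda>j. f i (learn_state (n i) (qh 0 i) (u i) \<tau>) j - xs i j))
       has_integral (\<Sum>i<m. L i (qh t i) - L i (qh 0 i))) {0..t}"
      by (rule has_integral_sum) (auto intro: each)
    hence I: "((\<lambda>\<tau>. \<Sum>i<m. ip (n i) (u i \<tau>) (\<lambda>j. f i (learn_state (n i) (qh 0 i) (u i) \<tau>) j - xs i j))
       has_integral (merged_storage m L (qh t) - merged_storage m L (qh 0))) {0..t}"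
      by (simp add: merged_storage_def sum_subtractf)
    show ?thesis
    proof (rule has_integral_eq[OF _ I])
      fix \<tau> assume "\<tau> \<in> {0..t}"
      hence tau: "0 \<le> \<tau>" by simp
      define x where "x = (\<lambda>k. f k (qh \<tau> k))"
      have sx: "\<forall>i<m. prob_simplex (n i) (x i)"
        using cf inR[OF _ tau] unfolding x_def conversion_fun_def by blast
      have "(\<Sum>i<m. ip (n i) (u i \<tau>) (\<lambda>j. f i (learn_state (n i) (qh 0 i) (u i) \<tau>) j - xs i j))
          = (\<Sum>i<m. ip (n i) (r \<tau> i) (\<lambda>j. x i j - xs i j) + ip (n i) (payoff_vec m n A i x) (\<lambda>j. x i j - xs i j))"
        by (intro sum.cong refl) (simp add: ls[OF _ tau], simp add: u_def fb_input_def x_def ip_add)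
      also have "\<dots> = (\<Sum>i<m. ip (n i) (r \<tau> i) (\<lambda>j. x i j - xs i j))"
        using game_zero[OF cs ne fm sx] by (simp add: sum.distrib)
      finally show "(\<Sum>i<m. ip (n i) (u i \<tau>) (\<lambda>j. f i (learn_state (n i) (qh 0 i) (u i) \<tau>) j - xs i j))
          = (\<Sum>i<m. ip (n i) (r \<tau> i) (\<lambda>j. f i (qh \<tau> i) j - xs i j))"
        unfolding x_def .
    qed
  qed
  have part1: "fb_finitely_lossless m n A f xs (merged_storage m L)"
    unfolding fb_finitely_lossless_def using lb integ by blast
  have part2: "merged_storage m L (qh t) = merged_storage m L (qh 0)"
    if "fb_solution m n A f (\<lambda>_ _ _. 0) qh" "0 \<le> t" for qh t
  proof -
    have "((\<lambda>\<tau>. \<Sum>i<m. ip (n i) ((\<lambda>_ _ _. 0) \<tau> i) (\<lambda>j. f i (qh \<tau> i) j - xs i j))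
           has_integral (merged_storage m L (qh t) - merged_storage m L (qh 0))) {0..t}"
      by (rule integ[OF that])
    hence "((\<lambda>\<tau>. 0) has_integral (merged_storage m L (qh t) - merged_storage m L (qh 0))) {0..t}"
      by (simp add: ip_def)
    thus ?thesis by simp
  qed
  show ?thesis using part1 part2 by blast
qed

end
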